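(* For every string $s\in\Sigma^*$, $\mathcal{F}^{-1}(\mathcal{F}(s))=s$.
   Context: Let $\Sigma$ be an alphabet and let $\texttt{@},\texttt{\$}$ be two distinct symbols not in $\Sigma$. For $s\in\Sigma^*$ with $|s|=n$ let $\hat s=\texttt{@}\,s\,\texttt{\$}$ (length $n+2$, positions $1,\dots,n+2$); $\hat s[i..j)$ denotes the substring at positions $i,\dots,j-1$ (empty if $i\ge j$). The leading (resp. trailing) run of a non-empty string is its longest prefix (resp. suffix) consisting of a single repeated symbol. A bilateral token is a pair $(\sigma,p)$ with $\sigma$ a non-empty string and $p\ge 0$ an integer (split position); $\sigma[1..p]$ is its front, $\sigma[p+1..|\sigma|]$ its back; it is terminal if $p=0$. The Flashback decomposition $\mathcal{F}(s)$ is the token sequence produced as follows. Start with active span $[lo,hi)=[1,n+3)$ of $\hat s$. At a step: if $lo\ge hi$, stop. Let $\ell$ be the length of the leading run of $\hat s[lo..hi)$. If $\ell=hi-lo$, append $(\hat s[lo..hi),0)$ and stop. Otherwise let $\hat s[r..hi)$ be the trailing run of $\hat s[lo..hi)$ and $\sigma=\hat s[lo..lo+\ell)\cdot\hat s[r..hi)$; if $lo+\ell\ge r$, append $(\sigma,0)$ and stop; otherwise append $(\sigma,\ell)$ and repeat with active span $[lo+\ell,r)$. For a token sequence $T=[\tau_0,\dots,\tau_{k-1}]$ with $\tau_i=(\sigma_i,p_i)$, define $N_{k-1}=\sigma_{k-1}$ and $N_i=\sigma_i[1..p_i]\cdot N_{i+1}\cdot\sigma_i[p_i+1..|\sigma_i|]$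 for $i<k-1$; the reconstruction $\mathcal{F}^{-1}(T)$ is $N_0$ with its first and last characters removed. *)

theory Defs
  imports Main
begin

datatype 'a xsym = At | Dollar | Ch 'a

definition hat :: "'a list \<Rightarrow> 'a xsym list" where
  "hat s = At # map Ch s @ [Dollar]"

definition lead_run :: "'b list \<Rightarrow> nat" where
  "lead_run w = length (takeWhile (\<lambda>c. c = hd w) w)"

definition trail_run :: "'b list \<Rightarrow> nat" where
  "trail_run w = length (takeWhile (\<lambda>c. c = last w) (rev w))"

lemma lead_run_pos: "w \<noteq> [] \<Longrightarrow> lead_run w \<ge> 1"
  by (cases w) (auto simp: lead_run_def)

(* Flashback decomposition applied to the content of the active span
   (the active span [lo,hi) is represented by the substring \<hat>s[lo..hi)). *)
function flash :: "'b list \<Rightarrow> ('b list \<times> nat) list" where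
  "flash w =
     (if w = [] then []
      else let l = lead_run w in
        if l = length w then [(w, 0)]
        else let r = length w - trail_run w;
                 \<sigma> = take l w @ drop r w in
          if l \<ge> r then [(\<sigma>, 0)]
          else (\<sigma>, l) # flash (drop l (take r w)))"
  by pat_completeness auto
termination
proof (relation "measure length", simp)
  fix w :: "'b list" and l r
  assume "w \<noteq> []" "l = lead_run w" "\<not> r \<le> l"
  then show "(drop l (take r w), w) \<in> measure length"
    using lead_run_pos[of w] by (cases w) auto
qed

definition flashback :: "'a list \<Rightarrow> ('a xsym list \<times> nat) list" where
  "flashback s = flash (hat s)"

fun nest :: "('b list \<times> nat) list \<Rightarrow> 'b list" where
  "nest [] = []"
| "nest [(\<sigma>, p)] = \<sigma>"
| "nest ((\<sigma>, p) # T) = take p \<sigma> @ nest T @ drop p \<sigma>"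

definition flashback_inv :: "('b list \<times> nat) list \<Rightarrow> 'b list" where
  "flashback_inv T = butlast (tl (nest T))"

end

theory Submission
  imports Defs
begin

lemma tw_all: "k < length (takeWhile P xs) \<Longrightarrow> P (xs ! k)"
  by (metis nth_mem set_takeWhileD takeWhile_nth)

lemma lead_prop: "k < lead_run w \<Longrightarrow> w ! k = hd w"
  unfolding lead_run_def using tw_all[of k "\<lambda>c. c = hd w" w] by simp

lemma lead_stop: "lead_run w < length w \<Longrightarrow> w ! lead_run w \<noteq> hd w"
  unfolding lead_run_def using nth_length_takeWhile[of "\<lambda>c. c = hd w" w] by simp

lemma lead_le: "lead_run w \<le> length w"
  unfolding lead_run_def by (rule length_takeWhile_le)

lemma trail_le: "trail_run w \<le> length w"
  unfolding trail_run_def by (metis length_rev length_takeWhile_le)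

lemma trail_prop:
  assumes "length w - trail_run w \<le> j" "j < length w"
  shows "w ! j = last w"
proof -
  define k where "k = length w - 1 - j"
  have "k < trail_run w" using assms trail_le[of w] unfolding k_def by linarith
  then have "rev w ! k = last w" unfolding trail_run_def
    using tw_all[of k "\<lambda>c. c = last w" "rev w"] by simp
  moreover have "rev w ! k = w ! j" using assms unfolding k_def
    by (simp add: rev_nth)
  ultimately show ?thesis by simp
qed

lemma l_le_r:
  assumes "lead_run w < length w"
  shows "lead_run w \<le> length w - trail_run w"
proof (rule ccontr)
  assume "\<not> ?thesis"
  then have lt: "length w - trail_run w < lead_run w" by simp
  have "w ! lead_run w = last w" using lt assms by (intro trail_prop) auto
  moreover have "w ! (length w - trail_run w) = last w" using lt assms by (intro trail_prop) auto
  moreover have "w ! (length w - trail_run w) = hd w" using lt by (rule lead_prop)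
  ultimately show False using lead_stop[OF assms] by simp
qed

declare flash.simps[simp del]

lemma flash_ne: "w \<noteq> [] \<Longrightarrow> flash w \<noteq> []"
  by (subst flash.simps) (auto simp: Let_def)

lemma nest_cons: "T \<noteq> [] \<Longrightarrow> nest ((\<sigma>, p) # T) = take p \<sigma> @ nest T @ drop p \<sigma>"
  by (cases T) auto

lemma nest_flash: "nest (flash w) = w"
proof (induction w rule: flash.induct)
  case (1 w)
  show ?case
  proof (cases "w = []")
    case True then show ?thesis by (simp add: flash.simps)
  next
    case ne: False
    define l where "l = lead_run w"
    define r where "r = length w - trail_run w"
    show ?thesis
    proof (cases "l = length w")
      case True then show ?thesis using ne by (subst flash.simps) (simp add: l_def[symmetric] Let_def)
    next
      case nl: False
      have lt: "l < length w" using nl lead_le[of w] l_def by simp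
      have lr: "l \<le> r" using l_le_r[of w] lt l_def r_def by simp
      have rn: "r \<le> length w" using r_def by simp
      show ?thesis
      proof (cases "r \<le> l")
        case True
        then have "r = l" using lr by simp
        then show ?thesis using ne nl True
          by (subst flash.simps) (simp add: l_def[symmetric] r_def[symmetric] Let_def)
      next
        case False
        have IH: "nest (flash (drop l (take r w))) = drop l (take r w)"
          using 1 ne nl False lr unfolding l_def r_def by (simp add: Let_def)
        have nonem: "drop l (take r w) \<noteq> []" using False rn by simp
        have "flash w = (take l w @ drop r w, l) # flash (drop l (take r w))"
          using ne nl False by (subst flash.simps) (simp add: l_def[symmetric] r_def[symmetric] Let_def)
        then have "nest (flash w) = take l (take l w @ drop r w) @ drop l (take r w) @ drop l (take l w @ drop r w)"
          using nest_cons[OF flash_ne[OF nonem]] IH by simp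
        also have "\<dots> = take l w @ drop l (take r w) @ drop r w" using lt by simp
        also have "\<dots> = w" using lr rn
          by (metis append.assoc append_take_drop_id take_take min_absorb1 drop_take)
        finally show ?thesis .
      qed
    qed
  qed
qed

theorem theorem4p2:
  fixes s :: "'a list"
  shows "flashback_inv (flashback s) = map Ch s"
  unfolding flashback_inv_def flashback_def by (simp add: nest_flash hat_def)

end
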